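(* If $m$ and $n$ are non-negative integers, then $$\sum_{k = 1}^n \sum_{j = 0}^{k - 1} \frac{( n - j)!}{k - j}\binom{n}{j}\left\{ {m \atop n - j} \right\} = n^m H_n - \sum_{k = 1}^n \frac{( n - k)^m }{k} .$$
   Context: $\left\{ {m \atop p} \right\}$ denotes the Stirling number of the second kind; $H_n=\sum_{i=1}^n\frac1i$; the convention $0^0=1$ is used. Empty sums are zero. *)

theory Defs
  imports "HOL-Analysis.Analysis" "HOL-Combinatorics.Stirling"
begin

end

theory Submission imports Defs begin
lemma key_choose: "(x::nat) * (fact i * (x choose i)) = i * (fact i * (x choose i)) + fact (Suc i) * (x choose Suc i)"
proof -
  have "(x::nat) * (x choose i) = i * (x choose i) + Suc i * (x choose Suc i)"
    by (metis Suc_times_binomial add_left_imp_eq binomial_Suc_Suc distrib_left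
    group_cancel.add1 mult_Suc)
  then have "fact i * (x * (x choose i)) = fact i * (i * (x choose i) + Suc i * (x choose Suc i))" by simp
  then show ?thesis by (simp add: algebra_simps fact_Suc)
qed

lemma pow_stirling: "(x::nat) ^ m = (\<Sum>i\<le>m. Stirling m i * (fact i * (x choose i)))"
proof (induction m)
  case 0
  then show ?case by simp
next
  case (Suc m)
  define A where "A = (\<Sum>i\<le>m. Stirling m i * (i * (fact i * (x choose i))))"
  define B where "B = (\<Sum>i\<le>m. Stirling m i * (fact (Suc i) * (x choose Suc i)))"
  have "x ^ Suc m = (\<Sum>i\<le>m. Stirling m i * (x * (fact i * (x choose i))))"
    using Suc by (simp add: sum_distrib_left algebra_simps)
  also have "\<dots> = A + B"
    unfolding A_def B_def by (simp add: key_choose algebra_simps sum.distrib)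
  finally have L: "x ^ Suc m = A + B" .
  have A2: "A = (\<Sum>i\<le>m. Suc i * Stirling m (Suc i) * (fact (Suc i) * (x choose Suc i)))"
  proof -
    have "(\<Sum>i\<le>Suc m. Stirling m i * (i * (fact i * (x choose i)))) = A"
      unfolding A_def by simp
    moreover have "(\<Sum>i\<le>Suc m. Stirling m i * (i * (fact i * (x choose i))))
        = (\<Sum>i\<le>m. Suc i * Stirling m (Suc i) * (fact (Suc i) * (x choose Suc i)))"
      by (subst sum.atMost_Suc_shift) (simp add: algebra_simps)
    ultimately show ?thesis by simp
  qed
  have "(\<Sum>i\<le>Suc m. Stirling (Suc m) i * (fact i * (x choose i)))
      = (\<Sum>i\<le>m. Stirling (Suc m) (Suc i) * (fact (Suc i) * (x choose Suc i)))"
    by (subst sum.atMost_Suc_shift) simp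
  also have "\<dots> = (\<Sum>i\<le>m. Suc i * Stirling m (Suc i) * (fact (Suc i) * (x choose Suc i))) + B"
    unfolding B_def by (simp add: algebra_simps sum.distrib)
  finally show ?case using L A2 by simp
qed

lemma harm_shift: "j \<le> n \<Longrightarrow> (\<Sum>k=1..n. if j < k then 1 / real (k - j) else 0) = (harm (n - j) :: real)"
proof (induction n rule: dec_induct)
  case base
  then show ?case by (simp add: harm_expand)
next
  case (step n)
  have "Suc n - j = Suc (n - j)" using step by simp
  then show ?case using step by (simp add: harm_Suc field_simps)
qed

lemma choose_harm: "(\<Sum>k=1..n. real ((n - k) choose i) / real k) = real (n choose i) * (harm n - harm i)"
proof (induction n arbitrary: i)
  case 0
  then show ?case by (cases i) (simp_all add: harm_expand)
next
  case (Suc n)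
  show ?case
  proof (cases i)
    case 0
    then show ?thesis by (simp add: harm_def divide_inverse)
  next
    case (Suc i')
    have "(\<Sum>k=1..Suc n. real ((Suc n - k) choose i) / real k)
       = (\<Sum>k=1..n. real ((Suc n - k) choose i) / real k)"
      using Suc by simp
    also have "\<dots> = (\<Sum>k=1..n. real ((n - k) choose i) / real k + real ((n - k) choose i') / real k)"
      by (intro sum.cong refl) (simp add: Suc Suc_diff_le add_divide_distrib)
    also have "\<dots> = real (n choose i) * (harm n - harm i) + real (n choose i') * (harm n - harm i')"
      using Suc.IH by (simp add: sum.distrib)
    also have "\<dots> = real (Suc n choose i) * (harm (Suc n) - harm i)"
    proof -
      have e0: "real (Suc i') * real (Suc n choose Suc i') = real (Suc n) * real (n choose i')"
        by (metis Suc_times_binomial_eq of_nat_mult mult.commute)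
      have e1: "real (Suc n choose i) / real (Suc n) = real (n choose i') / real i"
        using e0 Suc by (simp add: field_simps)
      have hs: "harm (Suc n) = harm n + 1 / real (Suc n)" "harm i = harm i' + 1 / (real i :: real)"
        using Suc by (simp_all add: harm_Suc field_simps)
      have cs: "real (Suc n choose i) = real (n choose i) + real (n choose i')"
        using Suc by simp
      show ?thesis
        unfolding hs cs using e1 cs Suc by (simp add: algebra_simps add_divide_distrib)
    qed
    finally show ?thesis .
  qed
qed

lemma rev_sum: "(\<Sum>j<(n::nat). F (n - j)) = (\<Sum>i=1..n. (F i::real))"
proof (rule sum.reindex_bij_witness[of _ "\<lambda>i. n - i" "\<lambda>i. n - i"])
  fix a assume "a \<in> {1..n}" then show "n - (n - a) = a" "n - a \<in> {..<n}" by auto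
next
  fix a assume "a \<in> {..<n}" then show "n - (n - a) = a" "n - a \<in> {1..n}" by auto
next
  fix a assume "a \<in> {..<n}" then show "F (n - a) = F (n - a)" by simp
qed

theorem proposition16:
  fixes m n :: nat
  shows "(\<Sum>k=1..n. \<Sum>j=0..k-1.
            fact (n - j) / real (k - j) * real (n choose j) * real (Stirling m (n - j)))
         = real n ^ m * harm n - (\<Sum>k=1..n. real (n - k) ^ m / real k)"
proof -
  define f where "f j = fact (n - j) * real (n choose j) * real (Stirling m (n - j))" for j
  define T where "T i = real (Stirling m i) * fact i" for i
  define g where "g i = T i * real (n choose i) * harm i" for i
  have s1: "(\<Sum>j=0..k-1. fact (n - j) / real (k - j) * real (n choose j) * real (Stirling m (n - j)))
      = (\<Sum>j<n. f j * (if j < k then 1 / real (k - j) else 0))" if k: "k \<in> {1..n}" for k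
  proof -
    have "(\<Sum>j<n. if j < k then f j / real (k - j) else 0) = (\<Sum>j\<in>{j\<in>{..<n}. j < k}. f j / real (k - j))"
      by (rule sum.inter_filter[symmetric]) simp
    also have "{j\<in>{..<n}. j < k} = {0..k-1}" using k by auto
    finally have "(\<Sum>j=0..k-1. f j / real (k - j)) = (\<Sum>j<n. if j < k then f j / real (k - j) else 0)" by simp
    moreover have "(\<Sum>j=0..k-1. fact (n - j) / real (k - j) * real (n choose j) * real (Stirling m (n - j)))
        = (\<Sum>j=0..k-1. f j / real (k - j))" by (intro sum.cong refl) (simp add: f_def)
    moreover have "(\<Sum>j<n. f j * (if j < k then 1 / real (k - j) else 0))
        = (\<Sum>j<n. if j < k then f j / real (k - j) else 0)" by (intro sum.cong refl) simp
    ultimately show ?thesis by simp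
  qed
  have "(\<Sum>k=1..n. \<Sum>j=0..k-1.
            fact (n - j) / real (k - j) * real (n choose j) * real (Stirling m (n - j)))
      = (\<Sum>k=1..n. \<Sum>j<n. f j * (if j < k then 1 / real (k - j) else 0))"
    using s1 by (rule sum.cong[OF refl])
  also have "\<dots> = (\<Sum>j<n. f j * (\<Sum>k=1..n. (if j < k then 1 / real (k - j) else 0)))"
    by (subst sum.swap) (simp add: sum_distrib_left)
  also have "\<dots> = (\<Sum>j<n. f j * harm (n - j))"
  proof (intro sum.cong refl)
    fix j assume "j \<in> {..<n}"
    then have "j \<le> n" by simp
    from harm_shift[OF this] show "f j * (\<Sum>k=1..n. (if j < k then 1 / real (k - j) else 0)) = f j * harm (n - j)"
      by simp
  qed
  also have "\<dots> = (\<Sum>i\<in>{1..n}. g i)"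
  proof -
    have "(\<Sum>j<n. f j * harm (n - j)) = (\<Sum>j<n. (\<lambda>i. f (n - i) * harm i) (n - j))"
      by (intro sum.cong refl) simp
    also have "\<dots> = (\<Sum>i=1..n. f (n - i) * harm i)" by (rule rev_sum)
    also have "\<dots> = (\<Sum>i=1..n. g i)"
    proof (intro sum.cong refl)
      fix i assume i: "i \<in> {1..n}"
      have "n choose (n - i) = n choose i" using i binomial_symmetric[of i n] by simp
      moreover have "n - (n - i) = i" using i by simp
      ultimately show "f (n - i) * harm i = g i" by (simp add: f_def g_def T_def)
    qed
    finally show ?thesis .
  qed
  also have "\<dots> = (\<Sum>i\<le>n. g i)"
    by (rule sum.mono_neutral_left) (auto simp: g_def harm_expand Suc_le_eq)
  also have "\<dots> = (\<Sum>i\<le>m + n. g i)"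
    by (rule sum.mono_neutral_left) (auto simp: g_def)
  also have "\<dots> = (\<Sum>i\<le>m. g i)"
    by (rule sum.mono_neutral_right) (auto simp: g_def T_def)
  finally have L: "(\<Sum>k=1..n. \<Sum>j=0..k-1.
            fact (n - j) / real (k - j) * real (n choose j) * real (Stirling m (n - j)))
      = (\<Sum>i\<le>m. g i)" .
  have P: "real x ^ m = (\<Sum>i\<le>m. T i * real (x choose i))" for x
  proof -
    have "real x ^ m = real (x ^ m)" by simp
    also have "\<dots> = (\<Sum>i\<le>m. T i * real (x choose i))"
      by (subst pow_stirling) (simp add: T_def mult.assoc)
    finally show ?thesis .
  qed
  have "(\<Sum>k=1..n. real (n - k) ^ m / real k)
      = (\<Sum>k=1..n. \<Sum>i\<le>m. T i * (real ((n - k) choose i) / real k))"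
    by (simp only: P sum_divide_distrib times_divide_eq_right)
  also have "\<dots> = (\<Sum>i\<le>m. T i * (\<Sum>k=1..n. real ((n - k) choose i) / real k))"
    by (subst sum.swap) (simp add: sum_distrib_left)
  also have "\<dots> = (\<Sum>i\<le>m. T i * (real (n choose i) * (harm n - harm i)))"
    by (simp only: choose_harm)
  finally have R: "(\<Sum>k=1..n. real (n - k) ^ m / real k) = \<dots>" .
  have "real n ^ m * harm n - (\<Sum>k=1..n. real (n - k) ^ m / real k)
      = (\<Sum>i\<le>m. T i * real (n choose i) * harm n - T i * (real (n choose i) * (harm n - harm i)))"
    unfolding R unfolding P by (simp add: sum_distrib_right sum_subtractf)
  also have "\<dots> = (\<Sum>i\<le>m. g i)"
    by (intro sum.cong refl) (simp add: g_def algebra_simps)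
  finally show ?thesis using L by simp
qed
end
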